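(* Let $A \in \mathbb{R}^{m\times n}$ satisfy the strong null space property (sNSP) of order $s$ (defined in the context). Let $\mathbf{b} \in \mathbb{R}^m$ with $\mathbf{b} \neq \mathbf{0}$, and let $\mathbf{x} \in \mathbb{R}^n$ be an $s$-sparse vector (i.e. $\|\mathbf{x}\|_0 \le s$) with $A\mathbf{x} = \mathbf{b}$. Then $\mathbf{x}$ is a local minimizer of $\|\cdot\|_1/\|\cdot\|_2$ on the affine set $\{\mathbf{z} : A\mathbf{z} = \mathbf{b}\}$: there exists $t^* > 0$ such that for every $\mathbf{v} \in \ker(A)$ with $0 < \|\mathbf{v}\|_2 \le t^*$, $$\frac{\|\mathbf{x}\|_1}{\|\mathbf{x}\|_2} \le \frac{\|\mathbf{x}+\mathbf{v}\|_1}{\|\mathbf{x}+\mathbf{v}\|_2}.$$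
   Context: Notation: $[n] = \{1,\dots,n\}$. For $S \subset [n]$, $\bar S = [n]\setminus S$. For $\mathbf{x} \in \mathbb{R}^n$, $\mathbf{x}_S \in \mathbb{R}^n$ has entries $(\mathbf{x}_S)_i = x_i$ if $i \in S$ and $0$ otherwise. $\|\mathbf{x}\|_0$ is the number of nonzero entries of $\mathbf{x}$. $\ker(A) = \{\mathbf{x} : A\mathbf{x} = \mathbf{0}\}$. Definition (sNSP): $A \in \mathbb{R}^{m\times n}$ satisfies the strong null space property of order $s$ if $(s+1)\|\mathbf{v}_S\|_1 \le \|\mathbf{v}_{\bar S}\|_1$ for all $\mathbf{v} \in \ker(A)\setminus\{\mathbf{0}\}$ and all $S \subset [n]$ with $|S| \le s$. *)

theory Defs
  imports "HOL-Analysis.Analysis"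
begin

text \<open>Vectors in R^n are real^'n (finite index type 'n); matrices A in R^(m x n) are real^'n^'m.
  The Euclidean (l2) norm of real^'n is the library norm.\<close>

definition l1norm :: "real ^ 'n \<Rightarrow> real" where
  "l1norm x = (\<Sum>i\<in>UNIV. \<bar>x $ i\<bar>)"

definition l0norm :: "real ^ 'n \<Rightarrow> nat" where
  "l0norm x = card {i. x $ i \<noteq> 0}"

definition restr :: "'n set \<Rightarrow> real ^ 'n \<Rightarrow> real ^ 'n" where
  "restr S x = (\<chi> i. if i \<in> S then x $ i else 0)"

definition sNSP :: "real ^ 'n ^ 'm \<Rightarrow> nat \<Rightarrow> bool" where
  "sNSP A s \<longleftrightarrow> (\<forall>v. A *v v = 0 \<and> v \<noteq> 0 \<longrightarrow>
     (\<forall>S. card S \<le> s \<longrightarrow>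
        (real s + 1) * l1norm (restr S v) \<le> l1norm (restr (- S) v)))"

end

theory Submission
  imports Defs
begin

lemma nsq: "norm (x::real^'n) ^ 2 = (\<Sum>i\<in>UNIV. (x$i)^2)"
  unfolding power2_norm_eq_inner inner_vec_def by (simp add: power2_eq_square)

lemma l1r: "l1norm (restr S v) = (\<Sum>i\<in>UNIV. if i \<in> S then \<bar>v$i\<bar> else 0)"
  unfolding l1norm_def restr_def by (auto intro: sum.cong)

lemma coord_le: "\<bar>(x::real^'n)$i\<bar> \<le> norm x"
  by (metis component_le_norm_cart real_norm_def)

lemma key_coef:
  fixes x :: "real^'n"
  assumes "card {j. x$j \<noteq> 0} \<le> s" "1 \<le> s"
  shows "l1norm x * \<bar>x$i\<bar> \<le> real s * (norm x)^2"
proof -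
  let ?S = "{j. x$j \<noteq> 0}"
  have "l1norm x * \<bar>x$i\<bar> = (\<Sum>j\<in>?S. \<bar>x$j\<bar> * \<bar>x$i\<bar>)"
    unfolding l1norm_def sum_distrib_right by (rule sum.mono_neutral_right) auto
  also have "\<dots> \<le> (\<Sum>j\<in>?S. ((x$j)^2 + (x$i)^2)/2)"
  proof (rule sum_mono)
    fix j have "0 \<le> (\<bar>x$j\<bar> - \<bar>x$i\<bar>)^2" by simp
    then show "\<bar>x$j\<bar> * \<bar>x$i\<bar> \<le> ((x$j)^2 + (x$i)^2)/2"
      by (simp add: power2_eq_square algebra_simps)
  qed
  also have "\<dots> = ((\<Sum>j\<in>?S. (x$j)^2) + real (card ?S) * (x$i)^2)/2"
    by (simp add: sum.distrib sum_divide_distrib[symmetric])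
  also have "(\<Sum>j\<in>?S. (x$j)^2) = (norm x)^2"
    unfolding nsq by (rule sum.mono_neutral_left) auto
  also have "real (card ?S) * (x$i)^2 \<le> real s * (norm x)^2"
  proof (rule mult_mono)
    show "(x$i)^2 \<le> (norm x)^2"
      by (metis abs_le_square_iff abs_norm_cancel coord_le)
  qed (use assms in auto)
  finally have "l1norm x * \<bar>x$i\<bar> \<le> ((norm x)^2 + real s * (norm x)^2)/2"
    by (simp add: divide_right_mono)
  also have "\<dots> \<le> real s * (norm x)^2"
  proof -
    have "1 * (norm x)^2 \<le> real s * (norm x)^2"
      using assms(2) by (intro mult_right_mono) auto
    then show ?thesis by simp
  qed
  finally show ?thesis .
qed

theorem theorem2p1:
  fixes A :: "real ^ 'n ^ 'm" and b :: "real ^ 'm" and x :: "real ^ 'n" and s :: nat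
  assumes "sNSP A s" and "b \<noteq> 0" and "l0norm x \<le> s" and "A *v x = b"
  shows "\<exists>t>0. \<forall>v. A *v v = 0 \<and> 0 < norm v \<and> norm v \<le> t \<longrightarrow>
           l1norm x / norm x \<le> l1norm (x + v) / norm (x + v)"
proof -
  define a where "a = l1norm x"
  define c where "c = norm x"
  define S where "S = {j. x$j \<noteq> 0}"
  have x0: "x \<noteq> 0" using assms(2,4) by auto
  have cpos: "c > 0" using x0 c_def by simp
  have ca: "c \<le> a" unfolding a_def c_def l1norm_def by (rule norm_le_l1_cart)
  have apos: "a > 0" using ca cpos by simp
  have cardS: "card S \<le> s" using assms(3) unfolding S_def l0norm_def .
  have s1: "1 \<le> s"
  proof (rule ccontr)
    assume "\<not> 1 \<le> s"
    then have "card S = 0" using cardS by linarith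
    then have "S = {}" using finite[of S] by simp
    then have "x = 0" unfolding S_def by (auto simp: vec_eq_iff)
    with x0 show False by simp
  qed
  define t where "t = c^2 / (a * (real s + 1))"
  have tpos: "t > 0" unfolding t_def using cpos apos by simp
  show ?thesis
  proof (intro exI[of _ t] conjI allI impI tpos)
    fix v :: "real^'n"
    assume hv: "A *v v = 0 \<and> 0 < norm v \<and> norm v \<le> t"
    define w where "w = norm v"
    define p where "p = (\<Sum>i\<in>UNIV. if x$i \<noteq> 0 then \<bar>v$i\<bar> else 0)"
    define q where "q = (\<Sum>i\<in>UNIV. if x$i = 0 then \<bar>v$i\<bar> else 0)"
    define \<sigma> where "\<sigma> = (\<Sum>i\<in>UNIV. sgn (x$i) * v$i)"
    define ip where "ip = (\<Sum>i\<in>UNIV. x$i * v$i)"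
    define L where "L = l1norm (x + v)"
    define N where "N = norm (x + v)"
    have v0: "v \<noteq> 0" using hv by auto
    have nsp: "(real s + 1) * p \<le> q"
    proof -
      have "(real s + 1) * l1norm (restr S v) \<le> l1norm (restr (- S) v)"
        using assms(1) hv v0 cardS unfolding sNSP_def by blast
      then show ?thesis unfolding l1r p_def q_def S_def by (simp add: if_distrib)
    qed
    have p0: "p \<ge> 0" unfolding p_def by (rule sum_nonneg) auto
    have pq: "p \<le> q" using nsp p0 by (simp add: algebra_simps) (smt (verit) mult_nonneg_nonneg of_nat_0_le_iff)
    have wl1: "w \<le> p + q"
    proof -
      have "w \<le> (\<Sum>i\<in>UNIV. \<bar>v$i\<bar>)" unfolding w_def by (rule norm_le_l1_cart)
      also have "\<dots> = p + q" unfolding p_def q_def sum.distrib[symmetric] by (rule sum.cong) auto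
      finally show ?thesis .
    qed
    have w0: "w \<ge> 0" unfolding w_def by simp
    have wt: "w \<le> t" using hv w_def by simp
    have tc: "t < c"
    proof -
      have "t \<le> c^2 / (a * 2)" unfolding t_def using apos cpos s1
        by (intro divide_left_mono mult_left_mono) auto
      also have "\<dots> \<le> c / 2" using ca cpos apos
        by (simp add: power2_eq_square divide_simps mult_right_mono)
      finally show ?thesis using cpos by simp
    qed
    have Npos: "N > 0"
    proof -
      have "x + v \<noteq> 0"
      proof
        assume "x + v = 0" then have "v = - x" by (simp add: add_eq_0_iff)
        then have "w = c" unfolding w_def c_def by simp
        with wt tc show False by simp
      qed
      then show ?thesis unfolding N_def by simp
    qed
    have Lge: "L \<ge> a + \<sigma> + q"
    proof -
      have "a + \<sigma> + q = (\<Sum>i\<in>UNIV. \<bar>x$i\<bar> + sgn (x$i) * v$i + (if x$i = 0 then \<bar>v$i\<bar> else 0))"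
        unfolding a_def \<sigma>_def q_def l1norm_def sum.distrib by simp
      also have "\<dots> \<le> L" unfolding L_def l1norm_def
      proof (rule sum_mono)
        fix i
        show "\<bar>x$i\<bar> + sgn (x$i) * v$i + (if x$i = 0 then \<bar>v$i\<bar> else 0) \<le> \<bar>(x + v)$i\<bar>"
          by (cases "x$i > 0"; cases "x$i < 0") (auto simp: abs_if)
      qed
      finally show ?thesis .
    qed
    have sigp: "\<sigma> \<ge> - p"
    proof -
      have "- p = (\<Sum>i\<in>UNIV. - (if x$i \<noteq> 0 then \<bar>v$i\<bar> else 0))" unfolding p_def sum_negf ..
      also have "\<dots> \<le> \<sigma>" unfolding \<sigma>_def
        by (rule sum_mono) (auto simp: abs_if sgn_if)
      finally show ?thesis .
    qed
    have N2: "N^2 = c^2 + 2 * ip + w^2"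
    proof -
      have "N^2 = (\<Sum>i\<in>UNIV. (x$i)^2 + 2 * (x$i * v$i) + (v$i)^2)"
        unfolding N_def nsq by (rule sum.cong) (auto simp: power2_eq_square algebra_simps)
      also have "\<dots> = c^2 + 2 * ip + w^2"
        unfolding c_def w_def nsq ip_def sum.distrib sum_distrib_left ..
      finally show ?thesis .
    qed
    have lin: "c^2 * \<sigma> - a * ip \<ge> - (real s * c^2) * p"
    proof -
      have "c^2 * \<sigma> - a * ip = (\<Sum>i\<in>UNIV. (c^2 * sgn (x$i) - a * x$i) * v$i)"
        unfolding \<sigma>_def ip_def sum_distrib_left sum_subtractf[symmetric]
        by (rule sum.cong) (auto simp: algebra_simps)
      moreover have "- (real s * c^2) * p = (\<Sum>i\<in>UNIV. - (real s * c^2) * (if x$i \<noteq> 0 then \<bar>v$i\<bar> else 0))"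
        unfolding p_def sum_distrib_left ..
      moreover have "(\<Sum>i\<in>UNIV. - (real s * c^2) * (if x$i \<noteq> 0 then \<bar>v$i\<bar> else 0))
          \<le> (\<Sum>i\<in>UNIV. (c^2 * sgn (x$i) - a * x$i) * v$i)"
      proof (rule sum_mono)
        fix i
        have k: "a * \<bar>x$i\<bar> \<le> real s * c^2"
          using key_coef[of x s i] cardS s1 unfolding a_def c_def S_def by simp
        have k2: "c^2 \<le> real s * c^2"
          using mult_right_mono[of 1 "real s" "c^2"] s1 by simp
        have c2: "0 \<le> c^2" by simp
        have ax: "0 \<le> a * \<bar>x$i\<bar>" using apos by simp
        have ba: "\<bar>c^2 * sgn (x$i) - a * x$i\<bar> \<le> real s * c^2" if "x$i \<noteq> 0"
        proof (cases "x$i > 0")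
          case True then show ?thesis using k k2 ax by (simp add: abs_le_iff) (insert c2, linarith)
        next
          case False then have "x$i < 0" using that by simp
          then show ?thesis using k k2 ax by (simp add: abs_le_iff) (insert c2, linarith)
        qed
        show "- (real s * c^2) * (if x$i \<noteq> 0 then \<bar>v$i\<bar> else 0) \<le> (c^2 * sgn (x$i) - a * x$i) * v$i"
        proof (cases "x$i = 0")
          case True then show ?thesis by simp
        next
          case False
          have "\<bar>(c^2 * sgn (x$i) - a * x$i) * v$i\<bar> \<le> real s * c^2 * \<bar>v$i\<bar>"
            unfolding abs_mult by (rule mult_right_mono[OF ba[OF False]]) simp
          then show ?thesis using False by (simp add: abs_le_iff)
        qed
      qed
      ultimately show ?thesis by simp
    qed
    have qsp: "q - real s * p \<ge> q / (real s + 1)"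
      using nsp pq p0 mult_right_mono[OF nsp, of "real s"] by (simp add: field_simps)
    have wq: "a * w^2 \<le> 2 * c^2 * q / (real s + 1)"
    proof -
      have "a * w^2 \<le> a * (t * (p + q))" unfolding power2_eq_square
        using apos w0 wt wl1 by (intro mult_left_mono mult_mono) auto
      also have "\<dots> \<le> a * (t * (2 * q))" using apos tpos pq by (intro mult_left_mono) auto
      also have "\<dots> = 2 * c^2 * q / (real s + 1)"
      proof -
        have "a * t = c^2 / (real s + 1)" unfolding t_def using apos by simp
        then have "a * (t * (2 * q)) = (c^2 / (real s + 1)) * (2 * q)" by (metis mult.assoc)
        then show ?thesis by simp
      qed
      finally show ?thesis .
    qed
    have main: "2 * a^2 * ip + a^2 * w^2 \<le> 2 * a * c^2 * (\<sigma> + q)"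
    proof -
      have m1: "2 * a * c^2 * (\<sigma> + q) - 2 * a^2 * ip = 2 * a * (c^2 * \<sigma> - a * ip) + 2 * a * c^2 * q"
        by (simp add: power2_eq_square algebra_simps)
      have m2: "2 * a * (- (real s * c^2) * p) \<le> 2 * a * (c^2 * \<sigma> - a * ip)"
        using lin apos by (intro mult_left_mono) auto
      have m3: "2 * a * (- (real s * c^2) * p) + 2 * a * c^2 * q = 2 * a * c^2 * (q - real s * p)"
        by (simp add: algebra_simps)
      have "2 * a * c^2 * (\<sigma> + q) - 2 * a^2 * ip \<ge> 2 * a * c^2 * (q - real s * p)"
        using m1 m2 m3 by linarith
      moreover have "2 * a * c^2 * (q - real s * p) \<ge> 2 * a * c^2 * (q / (real s + 1))"
        using qsp apos by (intro mult_left_mono) auto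
      moreover have "a * (a * w^2) \<le> a * (2 * c^2 * q / (real s + 1))"
        using wq apos by (intro mult_left_mono) auto
      moreover have "2*a*c^2*(q/(real s+1)) = a*(2*c^2*q/(real s+1))" by simp
      moreover have "a*(a*w^2) = a^2*w^2" by (simp add: power2_eq_square)
      ultimately show ?thesis by linarith
    qed
    have nonneg: "a + \<sigma> + q \<ge> 0" using sigp pq apos by simp
    have "(a * N)^2 \<le> (c * L)^2"
    proof -
      have "(a * N)^2 = a^2 * c^2 + (2 * a^2 * ip + a^2 * w^2)"
        by (simp add: power_mult_distrib N2 distrib_left)
      also have "\<dots> \<le> a^2 * c^2 + 2 * a * c^2 * (\<sigma> + q)" using main by simp
      also have "\<dots> \<le> c^2 * (a + \<sigma> + q)^2"
      proof -
        have "0 \<le> c^2*(\<sigma>+q)^2" by simp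
        moreover have "c^2*(a+\<sigma>+q)^2 = a^2 * c^2 + 2 * a * c^2 * (\<sigma> + q) + c^2*(\<sigma>+q)^2"
          by (simp add: power2_eq_square algebra_simps)
        ultimately show ?thesis by linarith
      qed
      also have "\<dots> \<le> c^2 * L^2"
        using Lge nonneg by (intro mult_left_mono power_mono) auto
      finally show ?thesis by (simp add: power_mult_distrib)
    qed
    moreover have "0 \<le> c * L"
    proof (rule mult_nonneg_nonneg)
      show "0 \<le> c" using cpos by linarith
      show "0 \<le> L" using Lge nonneg by linarith
    qed
    ultimately have aN: "a * N \<le> c * L" by (rule power2_le_imp_le)
    have e1: "a / c = (a*N)/(c*N)" using Npos by simp
    have e2: "L / N = (c*L)/(c*N)" using cpos by simp
    have "a / c \<le> L / N" unfolding e1 e2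
      using aN cpos Npos by (intro divide_right_mono) auto
    then show "l1norm x / norm x \<le> l1norm (x + v) / norm (x + v)"
      unfolding a_def c_def L_def N_def .
  qed
qed

end
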